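(* Let $Q_k^A,Q_k^B$ be the SDQ iterates, $Q_k^{\mathrm{err}}=Q_k^A-Q_k^B$, and $w_k^A,w_k^B$ the associated noise vectors (see context). Define \[ Q_{k+1}^{\mathrm{err}_L}=(I+\alpha\gamma DP\Pi_{Q_k^B}-\alpha D)Q_k^{\mathrm{err}_L}+\alpha w_k^A-\alpha w_k^B, \] with initial vector $Q_0^{\mathrm{err}_L}\in\mathbb{R}^{|\mathcal{S}||\mathcal{A}|}$. If $Q_0^{\mathrm{err}_L}\le Q_0^{\mathrm{err}}$ element-wise, then $Q_k^{\mathrm{err}_L}\le Q_k^{\mathrm{err}}$ element-wise for all $k\ge0$.
   Context: Finite MDP with states $\mathcal{S}=\{1,\dots,|\mathcal{S}|\}$, actions $\mathcal{A}=\{1,\dots,|\mathcal{A}|\}$, transitions $P(s'|s,a)$, bounded deterministic reward $r(s,a,s')$, discount $\gamma\in(0,1)$. Sampling distribution $d(s,a)>0$ on $\mathcal{S}\times\mathcal{A}$; at iteration $k$, $(s_k,a_k)\sim d$ i.i.d., $s_k'\sim P(\cdot|s_k,a_k)$, $r_{k+1}=r(s_k,a_k,s_k')$. Constant step-size $\alpha\in(0,1)$. SDQ: only entry $(s_k,a_k)$ is updated, $Q_{k+1}^A(s_k,a_k)=Q_k^A(s_k,a_k)+\alpha\{r_{k+1}+\gamma Q_k^A(s_k',\arg\max_aQ_k^B(s_k',a))-Q_k^A(s_k,a_k)\}$ and symmetrically for $B$ with roles of $A,B$ swapped. Vector notation: $Q\in\mathbb{R}^{|\mathcal{S}||\mathcal{A}|}$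 stacks $Q(\cdot,1),\dots,Q(\cdot,|\mathcal{A}|)$, so $Q(s,a)=(e_a\otimes e_s)^TQ$. $D$ is the diagonal matrix with entry $d(s,a)$ at position $(s,a)$. $P\in\mathbb{R}^{|\mathcal{S}||\mathcal{A}|\times|\mathcal{S}|}$ has row $(s,a)$ equal to $P(\cdot|s,a)$. $R(s,a)=\mathbb{E}[r(s,a,s')|s,a]$. For $Q$, $\pi_Q(s)=\arg\max_aQ(s,a)$ (fixed tie-breaking) and $\Pi_Q\in\mathbb{R}^{|\mathcal{S}|\times|\mathcal{S}||\mathcal{A}|}$ has $s$-th row $e_{\pi_Q(s)}^T\otimes e_s^T$. Noise: $w_k^A=(e_{a_k}\otimes e_{s_k})r_{k+1}+\gamma(e_{a_k}\otimes e_{s_k})e_{s_k'}^T\Pi_{Q_k^B}Q_k^A-(e_{a_k}\otimes e_{s_k})(e_{a_k}\otimes e_{s_k})^TQ_k^A-(DR+\gamma DP\Pi_{Q_k^B}Q_k^A-DQ_k^A)$, and $w_k^B$ is the same with $A$ and $B$ swapped. *)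

theory Defs
  imports "HOL-Analysis.Analysis"
begin

text \<open>Vectors Q in R^{|S||A|} are represented as real ^ ('s \<times> 'a): the entry
  at index (s,a) is Q(s,a); the canonical basis vector e_a \<otimes> e_s is axis (s,a) 1.
  Matrices are elements of real ^ cols ^ rows.\<close>

definition unitv :: "'i::finite \<Rightarrow> real ^ 'i" where
  "unitv i = axis i 1"

definition Dmat :: "('s::finite \<times> 'a::finite \<Rightarrow> real) \<Rightarrow> real ^ ('s \<times> 'a) ^ ('s \<times> 'a)" where
  "Dmat d = (\<chi> i j. if i = j then d i else 0)"

text \<open>Transition matrix P: row (s,a) is P(. | s,a).\<close>
definition Pmat :: "('s::finite \<Rightarrow> 'a::finite \<Rightarrow> 's \<Rightarrow> real) \<Rightarrow> real ^ 's ^ ('s \<times> 'a)" where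
  "Pmat P = (\<chi> i s'. P (fst i) (snd i) s')"

definition Rvec :: "('s::finite \<Rightarrow> 'a::finite \<Rightarrow> 's \<Rightarrow> real) \<Rightarrow> ('s \<Rightarrow> 'a \<Rightarrow> 's \<Rightarrow> real) \<Rightarrow> real ^ ('s \<times> 'a)" where
  "Rvec P r = (\<chi> i. \<Sum>s'\<in>UNIV. P (fst i) (snd i) s' * r (fst i) (snd i) s')"

text \<open>Greedy-policy matrix Pi_Q: row s is e_{pi_Q(s)}^T \<otimes> e_s^T, where
  greedy Q s is the (fixed tie-breaking) argmax of Q(s, .).\<close>
definition PiMat :: "(real ^ ('s \<times> 'a) \<Rightarrow> 's \<Rightarrow> 'a) \<Rightarrow> real ^ ('s::finite \<times> 'a::finite) \<Rightarrow> real ^ ('s \<times> 'a) ^ 's" where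
  "PiMat greedy Q = (\<chi> s. unitv (s, greedy Q s))"

definition sdq_update ::
  "(real ^ ('s \<times> 'a) \<Rightarrow> 's \<Rightarrow> 'a) \<Rightarrow> real \<Rightarrow> real \<Rightarrow> 's::finite \<times> 'a::finite \<Rightarrow> 's \<Rightarrow> real
   \<Rightarrow> real ^ ('s \<times> 'a) \<Rightarrow> real ^ ('s \<times> 'a) \<Rightarrow> real ^ ('s \<times> 'a)" where
  "sdq_update greedy \<alpha> \<gamma> sa s' rr QA QB =
     QA + (\<alpha> * (rr + \<gamma> * QA $ (s', greedy QB s') - QA $ sa)) *\<^sub>R unitv sa"

text \<open>Noise vector w^A (with roles: QA updated, QB selects); w^B is obtained by swapping.\<close>
definition sdq_noise ::
  "('s::finite \<times> 'a::finite \<Rightarrow> real) \<Rightarrow> ('s \<Rightarrow> 'a \<Rightarrow> 's \<Rightarrow> real) \<Rightarrow> ('s \<Rightarrow> 'a \<Rightarrow> 's \<Rightarrow> real)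
   \<Rightarrow> (real ^ ('s \<times> 'a) \<Rightarrow> 's \<Rightarrow> 'a) \<Rightarrow> real \<Rightarrow> 's \<times> 'a \<Rightarrow> 's \<Rightarrow> real
   \<Rightarrow> real ^ ('s \<times> 'a) \<Rightarrow> real ^ ('s \<times> 'a) \<Rightarrow> real ^ ('s \<times> 'a)" where
  "sdq_noise d P r greedy \<gamma> sa s' rr QA QB =
     rr *\<^sub>R unitv sa
     + (\<gamma> * (unitv s' \<bullet> (PiMat greedy QB *v QA))) *\<^sub>R unitv sa
     - (unitv sa \<bullet> QA) *\<^sub>R unitv sa
     - (Dmat d *v Rvec P r + \<gamma> *\<^sub>R ((Dmat d ** Pmat P ** PiMat greedy QB) *v QA) - Dmat d *v QA)"

end

theory Submission
  imports Defs
begin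

lemma unitv_nth: "unitv j $ i = (if i = j then 1 else 0)"
  by (simp add: unitv_def axis_def)

lemma unitv_inner: "unitv j \<bullet> v = v $ j"
  by (simp add: unitv_def inner_axis')

lemma if_mult_dist: "(if b then x else 0) * (z::real) = (if b then x * z else 0)"
  by simp

lemma Dmat_mv: "(Dmat d *v v) $ i = d i * v $ i"
  unfolding Dmat_def matrix_vector_mult_def
  by (simp add: if_mult_dist)

lemma PiMat_mv: "(PiMat g Q *v v) $ s = v $ (s, g Q s)"
  unfolding PiMat_def matrix_vector_mult_def
  by (simp add: unitv_nth if_mult_dist)

lemma Pmat_mv: "(Pmat P *v u) $ i = (\<Sum>s1\<in>UNIV. P (fst i) (snd i) s1 * u $ s1)"
  unfolding Pmat_def matrix_vector_mult_def by simp

lemma triple_mv: "((Dmat d ** Pmat P ** PiMat g Q) *v v) $ i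
   = d i * (\<Sum>s1\<in>UNIV. P (fst i) (snd i) s1 * v $ (s1, g Q s1))"
  by (simp add: matrix_vector_mul_assoc[symmetric] Dmat_mv Pmat_mv PiMat_mv)

lemma upd_nth: "sdq_update g \<alpha> \<gamma> sa s' rr QA QB $ i =
   QA $ i + (if i = sa then \<alpha> * (rr + \<gamma> * QA $ (s', g QB s') - QA $ sa) else 0)"
  by (simp add: sdq_update_def unitv_nth)

lemma noise_nth: "sdq_noise d P r g \<gamma> sa s' rr QA QB $ i =
   (if i = sa then rr + \<gamma> * QA $ (s', g QB s') - QA $ sa else 0)
   - (d i * Rvec P r $ i + \<gamma> * (d i * (\<Sum>s1\<in>UNIV. P (fst i) (snd i) s1 * QA $ (s1, g QB s1)))
      - d i * QA $ i)"
  by (simp add: sdq_noise_def unitv_nth unitv_inner PiMat_mv Dmat_mv triple_mv algebra_simps)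

lemma Lstep_nth: "((mat 1 + (\<alpha> * \<gamma>) *\<^sub>R (Dmat d ** Pmat P ** PiMat g Q) - \<alpha> *\<^sub>R Dmat d) *v v) $ i
  = v $ i + \<alpha> * \<gamma> * (d i * (\<Sum>s1\<in>UNIV. P (fst i) (snd i) s1 * v $ (s1, g Q s1))) - \<alpha> * (d i * v $ i)"
  by (simp add: matrix_vector_mult_add_rdistrib matrix_vector_mult_diff_rdistrib
      scaleR_matrix_vector_assoc[symmetric] triple_mv Dmat_mv)

theorem proposition5:
  fixes P :: "'s::finite \<Rightarrow> 'a::finite \<Rightarrow> 's \<Rightarrow> real"
    and r :: "'s \<Rightarrow> 'a \<Rightarrow> 's \<Rightarrow> real"
    and d :: "'s \<times> 'a \<Rightarrow> real"
    and \<alpha> \<gamma> :: real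
    and greedy :: "real ^ ('s \<times> 'a) \<Rightarrow> 's \<Rightarrow> 'a"
    and sa :: "nat \<Rightarrow> 's \<times> 'a" and s' :: "nat \<Rightarrow> 's"
    and QA QB QL :: "nat \<Rightarrow> real ^ ('s \<times> 'a)"
  assumes P_nonneg: "\<And>s a s1. P s a s1 \<ge> 0"
    and P_sum: "\<And>s a. (\<Sum>s1\<in>UNIV. P s a s1) = 1"
    and d_pos: "\<And>x. d x > 0"
    and d_sum: "(\<Sum>x\<in>UNIV. d x) = 1"
    and alpha: "0 < \<alpha>" "\<alpha> < 1"
    and gamma: "0 < \<gamma>" "\<gamma> < 1"
    and greedy: "\<And>Q s b. Q $ (s, b) \<le> Q $ (s, greedy Q s)"
    and QA_step: "\<And>k. QA (Suc k) =
        sdq_update greedy \<alpha> \<gamma> (sa k) (s' k) (r (fst (sa k)) (snd (sa k)) (s' k)) (QA k) (QB k)"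
    and QB_step: "\<And>k. QB (Suc k) =
        sdq_update greedy \<alpha> \<gamma> (sa k) (s' k) (r (fst (sa k)) (snd (sa k)) (s' k)) (QB k) (QA k)"
    and QL_step: "\<And>k. QL (Suc k) =
        (mat 1 + (\<alpha> * \<gamma>) *\<^sub>R (Dmat d ** Pmat P ** PiMat greedy (QB k)) - \<alpha> *\<^sub>R Dmat d) *v QL k
        + \<alpha> *\<^sub>R sdq_noise d P r greedy \<gamma> (sa k) (s' k) (r (fst (sa k)) (snd (sa k)) (s' k)) (QA k) (QB k)
        - \<alpha> *\<^sub>R sdq_noise d P r greedy \<gamma> (sa k) (s' k) (r (fst (sa k)) (snd (sa k)) (s' k)) (QB k) (QA k)"
    and init: "\<And>i. QL 0 $ i \<le> (QA 0 - QB 0) $ i"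
  shows "\<forall>k i. QL k $ i \<le> (QA k - QB k) $ i"
proof
  fix k show "\<forall>i. QL k $ i \<le> (QA k - QB k) $ i"
  proof (induction k)
    case 0 then show ?case using init by blast
  next
    case (Suc k)
    show ?case
    proof
      fix i
      define A where "A = QA k"
      define B where "B = QB k"
      define L where "L = QL k"
      have IH: "L $ j \<le> A $ j - B $ j" for j
      proof -
        from Suc have "QL k $ j \<le> (QA k - QB k) $ j" by blast
        then show ?thesis by (simp add: A_def B_def L_def)
      qed
      have d1: "d i \<le> 1"
        using member_le_sum[of i UNIV d] d_pos d_sum by (simp add: less_imp_le)
      have dpos: "0 < d i" using d_pos by blast
      let ?S = "\<Sum>s1\<in>UNIV. P (fst i) (snd i) s1 *
                 (A $ (s1, greedy B s1) - B $ (s1, greedy A s1) - L $ (s1, greedy B s1))"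
      have Snn: "?S \<ge> 0"
      proof (rule sum_nonneg)
        fix s1 :: 's
        have "B $ (s1, greedy A s1) \<le> B $ (s1, greedy B s1)" by (rule greedy)
        moreover have "L $ (s1, greedy B s1) \<le> A $ (s1, greedy B s1) - B $ (s1, greedy B s1)"
          by (rule IH)
        ultimately show "0 \<le> P (fst i) (snd i) s1 *
                 (A $ (s1, greedy B s1) - B $ (s1, greedy A s1) - L $ (s1, greedy B s1))"
          using P_nonneg by (intro mult_nonneg_nonneg) auto
      qed
      let ?rr = "r (fst (sa k)) (snd (sa k)) (s' k)"
      have a1: "QA (Suc k) $ i = A $ i + (if i = sa k then \<alpha> * (?rr + \<gamma> * A $ (s' k, greedy B (s' k)) - A $ sa k) else 0)"
        unfolding QA_step A_def B_def by (rule upd_nth)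
      have b1: "QB (Suc k) $ i = B $ i + (if i = sa k then \<alpha> * (?rr + \<gamma> * B $ (s' k, greedy A (s' k)) - B $ sa k) else 0)"
        unfolding QB_step A_def B_def by (rule upd_nth)
      have l1: "QL (Suc k) $ i = L $ i + \<alpha> * \<gamma> * (d i * (\<Sum>s1\<in>UNIV. P (fst i) (snd i) s1 * L $ (s1, greedy B s1))) - \<alpha> * (d i * L $ i)
         + \<alpha> * ((if i = sa k then ?rr + \<gamma> * A $ (s' k, greedy B (s' k)) - A $ sa k else 0)
   - (d i * Rvec P r $ i + \<gamma> * (d i * (\<Sum>s1\<in>UNIV. P (fst i) (snd i) s1 * A $ (s1, greedy B s1)))
      - d i * A $ i))
         - \<alpha> * ((if i = sa k then ?rr + \<gamma> * B $ (s' k, greedy A (s' k)) - B $ sa k else 0)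
   - (d i * Rvec P r $ i + \<gamma> * (d i * (\<Sum>s1\<in>UNIV. P (fst i) (snd i) s1 * B $ (s1, greedy A s1)))
      - d i * B $ i))"
        unfolding QL_step A_def B_def L_def vector_add_component vector_minus_component vector_scaleR_component
          Lstep_nth noise_nth by simp
      have sS: "?S = (\<Sum>s1\<in>UNIV. P (fst i) (snd i) s1 * A $ (s1, greedy B s1))
          - (\<Sum>s1\<in>UNIV. P (fst i) (snd i) s1 * B $ (s1, greedy A s1))
          - (\<Sum>s1\<in>UNIV. P (fst i) (snd i) s1 * L $ (s1, greedy B s1))"
        by (simp add: sum_subtractf[symmetric] algebra_simps)
      have eq: "(QA (Suc k) - QB (Suc k)) $ i - QL (Suc k) $ i
          = (1 - \<alpha> * d i) * (A $ i - B $ i - L $ i) + \<alpha> * \<gamma> * d i * ?S"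
        unfolding vector_minus_component a1 b1 l1 sS
        by (simp add: algebra_simps)
      have "0 \<le> (1 - \<alpha> * d i) * (A $ i - B $ i - L $ i)"
      proof (rule mult_nonneg_nonneg)
        have "\<alpha> * d i \<le> 1 * 1" using alpha d1 dpos by (intro mult_mono) auto
        then show "0 \<le> 1 - \<alpha> * d i" by simp
        show "0 \<le> A $ i - B $ i - L $ i" using IH[of i] by simp
      qed
      moreover have "0 \<le> \<alpha> * \<gamma> * d i * ?S"
        using alpha gamma dpos Snn by simp
      ultimately show "QL (Suc k) $ i \<le> (QA (Suc k) - QB (Suc k)) $ i"
        using eq by linarith
    qed
  qed
qed

end
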